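(* For $x=re^{i\theta}\in C$, the squared norms of the Euclidean and spherical shape operators of $M_x$ at $x$ are $$\|A^E(x)\|^2=\frac{ng}{r^2}\csc^2 g\theta\,(1+\delta\cos g\theta),\qquad \|A^S(x)\|^2=\frac{ng}{r^2}\csc^2 g\theta\,(1+\delta\cos g\theta)-\frac{n}{r^2}.$$
   Context: Let $M^n$ be a compact isoparametric hypersurface in the unit sphere $S^{n+1}\subset\mathbb{R}^{n+2}$ (constant principal curvatures) with $g$ distinct principal curvatures; then $g\in\{1,2,3,4,6\}$. Fix $x_0\in M$ and identify the 2-dimensional normal space $\nu_{x_0}M$ of $M$ in $\mathbb{R}^{n+2}$ with $\mathbb{C}$ so that the two focal submanifolds $M_+$, $M_-$ ($\dim M_+\le\dim M_-$) meet the normal circle at $1$ and $e^{i\pi/g}$ (the intersection points closest to $x_0$). The Weyl chamber is $C=\{re^{i\theta}:r>0,\ 0<\theta<\pi/g\}$. For $k=1,\dots,g$ let $\theta_k=k\pi/g-\pi/2$, $\alpha_k=e^{i\theta_k}$, and $m_k=m_1$ for $k$ odd, $m_k=m_2$ for $k$ even, where $(m_1,m_2)$, $m_1\le m_2$, is the multiplicity data of the principal curvatures; $m_1=m_2$ if $g$ is odd, and $(m_1+m_2)g=2n$. For $x\in C$, $M_x=\{p+\tilde\xi(p):p\in M\}$ where $\tilde\xi$ is the parallel normal field on $M$ with $\tilde\xi(x_0)=x-x_0$; it is an $n$-dimensional isoparametric submanifold of $\mathbb{R}^{n+2}$ lying in $S^{n+1}(|x|)$, with normal space $\nu_{x_0}M$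 at $x$, and $T_xM_x=\oplus_kE_k$, $\dim E_k=m_k$, with Euclidean shape operator $A_\xi|_{E_k}=\langle\xi,-\alpha_k/\langle x,\alpha_k\rangle\rangle\mathrm{Id}$ ($\langle\cdot,\cdot\rangle$ the real inner product on $\mathbb{C}=\mathbb{R}^2$). $H^E(x),A^E(x)$ denote mean curvature vector and shape operator of $M_x$ at $x$ in $\mathbb{R}^{n+2}$; $H^S(x),A^S(x)$ those of $M_x$ as a hypersurface of $S^{n+1}(|x|)$; $\|A\|^2$ is the sum of squared Hilbert–Schmidt norms over an orthonormal normal basis. Set $\delta=(m_2-m_1)/(m_2+m_1)$ if $g\ge2$ and $\delta=0$ if $g=1$, and let $\theta_{\min}\in(0,\pi/g)$ be defined by $\cos g\theta_{\min}=-\delta$. *)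

theory Defs
  imports "HOL-Analysis.Analysis"
begin

text \<open>The normal space of M at x0 is identified with the complex plane (real inner
  product = the inner product on complex from HOL-Analysis).\<close>

definition iso_alpha :: "nat \<Rightarrow> nat \<Rightarrow> complex" where
  "iso_alpha g k = cis (real k * pi / real g - pi / 2)"

definition iso_mult :: "nat \<Rightarrow> nat \<Rightarrow> nat \<Rightarrow> nat" where
  "iso_mult m1 m2 k = (if odd k then m1 else m2)"

definition iso_delta :: "nat \<Rightarrow> nat \<Rightarrow> nat \<Rightarrow> real" where
  "iso_delta g m1 m2 = (if g \<ge> 2 then (real m2 - real m1) / (real m2 + real m1) else 0)"

text \<open>Eigenvalue of the Euclidean shape operator A_xi of M_x at x on E_k:
  A_xi restricted to E_k equals  < xi, - alpha_k / <x, alpha_k> >  Id.\<close>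
definition iso_shape_ev :: "nat \<Rightarrow> complex \<Rightarrow> nat \<Rightarrow> complex \<Rightarrow> real" where
  "iso_shape_ev g x k xi = xi \<bullet> (- iso_alpha g k / complex_of_real (x \<bullet> iso_alpha g k))"

text \<open>Squared Hilbert-Schmidt norm of A_xi on T_x M_x = direct sum of E_k, dim E_k = m_k,
  A_xi acting as a scalar on each E_k.\<close>
definition iso_HS_sq :: "nat \<Rightarrow> nat \<Rightarrow> nat \<Rightarrow> complex \<Rightarrow> complex \<Rightarrow> real" where
  "iso_HS_sq g m1 m2 x xi = (\<Sum>k=1..g. real (iso_mult m1 m2 k) * (iso_shape_ev g x k xi)\<^sup>2)"

text \<open>||A^E(x)||^2 computed with the orthonormal basis e1, e2 of the normal space nu_x M_x = C.\<close>
definition iso_normE_sq :: "nat \<Rightarrow> nat \<Rightarrow> nat \<Rightarrow> complex \<Rightarrow> complex \<Rightarrow> complex \<Rightarrow> real" where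
  "iso_normE_sq g m1 m2 x e1 e2 = iso_HS_sq g m1 m2 x e1 + iso_HS_sq g m1 m2 x e2"

text \<open>||A^S(x)||^2: M_x is a hypersurface of S^{n+1}(|x|); its unit normal there is a unit
  vector nu of nu_x M_x orthogonal to x, and the spherical shape operator A^S_nu coincides
  with the Euclidean A_nu (nu is tangent to the sphere).\<close>
definition iso_normS_sq :: "nat \<Rightarrow> nat \<Rightarrow> nat \<Rightarrow> complex \<Rightarrow> complex \<Rightarrow> real" where
  "iso_normS_sq g m1 m2 x nu = iso_HS_sq g m1 m2 x nu"

end

theory Submission imports Defs begin

lemma parseval:
  fixes e1 e2 a :: complex
  assumes "norm e1 = 1" "norm e2 = 1" "e1 \<bullet> e2 = 0"
  shows "(e1 \<bullet> a)\<^sup>2 + (e2 \<bullet> a)\<^sup>2 = (norm a)\<^sup>2"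
proof -
  obtain x1 y1 where e1: "e1 = Complex x1 y1" by (cases e1)
  obtain x2 y2 where e2: "e2 = Complex x2 y2" by (cases e2)
  obtain a1 a2 where a: "a = Complex a1 a2" by (cases a)
  have h1: "x1^2+y1^2 = 1" using assms(1) e1 by (simp add: cmod_def)
  have h2: "x2^2+y2^2 = 1" using assms(2) e2 by (simp add: cmod_def)
  have h3: "x1*x2+y1*y2 = 0" using assms(3) e1 e2 by (simp add: inner_complex_def)
  define w where "w = x1*y2 - y1*x2"
  have w2: "w^2 = 1"
  proof -
    have "w^2 = (x1^2+y1^2)*(x2^2+y2^2) - (x1*x2+y1*y2)^2" unfolding w_def by algebra
    then show ?thesis using h1 h2 h3 by simp
  qed
  have hx2: "x2 = - y1 * w"
  proof -
    have "- y1 * w = x2 * (x1^2+y1^2) - x1*(x1*x2+y1*y2)" unfolding w_def by algebra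
    then show ?thesis using h1 h3 by simp
  qed
  have hy2: "y2 = x1 * w"
  proof -
    have "x1 * w = y2 * (x1^2+y1^2) - y1*(x1*x2+y1*y2)" unfolding w_def by algebra
    then show ?thesis using h1 h3 by simp
  qed
  have "(x1*a1+y1*a2)^2 + (x2*a1+y2*a2)^2 = (x1^2+y1^2)*(a1^2+a2^2)"
  proof -
    have "(x1*a1+y1*a2)^2 + (x2*a1+y2*a2)^2 = (x1*a1+y1*a2)^2 + w^2*(x1*a2-y1*a1)^2"
      unfolding hx2 hy2 by algebra
    also have "\<dots> = (x1^2+y1^2)*(a1^2+a2^2)" unfolding w2 by algebra
    finally show ?thesis .
  qed
  then show ?thesis using e1 e2 a h1 by (simp add: inner_complex_def cmod_def)
qed

lemma sin3: "sin (3*(t::real)) = sin t * (3*(cos t)^2 - (sin t)^2)"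
proof -
  have "3*t = 2*t + t" by simp
  then have e: "sin (3*t) = (sin (2*t)) * (cos t) + (cos (2*t)) * (sin t)"
    using sin_add[of "2*t" t] by simp
  show ?thesis unfolding e sin_double cos_double by (simp add: power2_eq_square algebra_simps)
qed
lemma cos3: "cos (3*(t::real)) = cos t * ((cos t)^2 - 3*(sin t)^2)"
proof -
  have "3*t = 2*t + t" by simp
  then have e: "cos (3*t) = (cos (2*t)) * (cos t) - (sin (2*t)) * (sin t)"
    using cos_add[of "2*t" t] by simp
  show ?thesis unfolding e sin_double cos_double by (simp add: power2_eq_square algebra_simps)
qed
lemma L3:
  fixes t :: real assumes "sin (3*t) \<noteq> 0"
  shows "1/(sin(pi/3-t))\<^sup>2 + 1/(sin(2*pi/3-t))\<^sup>2 + 1/(sin(pi-t))\<^sup>2 = 9/(sin(3*t))\<^sup>2"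
proof -
  define s where "s = sin t"
  define c where "c = cos t"
  define q where "q = sqrt 3"
  have q2: "q^2 = 3" unfolding q_def by simp
  have sc: "s^2 + c^2 = 1" unfolding s_def c_def by simp
  have A: "sin(pi/3-t) = (q*c - s)/2" unfolding s_def c_def q_def
    using sin_diff[of "pi/3" t] by (simp add: sin_60 cos_60)
  have "2*pi/3-t = pi - (pi/3+t)" by simp
  hence "sin(2*pi/3-t) = sin(pi/3+t)" by (simp only: sin_pi_minus)
  hence B: "sin(2*pi/3-t) = (q*c + s)/2" unfolding s_def c_def q_def
    using sin_add[of "pi/3" t] by (simp add: sin_60 cos_60)
  have C: "sin(pi-t) = s" unfolding s_def by simp
  have S3: "sin(3*t) = s*(3*c^2-s^2)" unfolding s_def c_def by (rule sin3)
  have s0: "s \<noteq> 0" and d0: "3*c^2-s^2 \<noteq> 0" using assms S3 by auto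
  have "(q*c-s)*(q*c+s) = q^2*c^2-s^2" by algebra
  hence fac: "(q*c-s)*(q*c+s) = 3*c^2-s^2" using q2 by simp
  have a0: "q*c-s \<noteq> 0" and b0: "q*c+s \<noteq> 0" using fac d0 by auto
  have "4/(q*c-s)^2 + 4/(q*c+s)^2 + 1/s^2 = 9/(s*(3*c^2-s^2))^2"
  proof -
    have e1: "4/(q*c-s)^2 + 4/(q*c+s)^2 = 4*((q*c+s)^2 + (q*c-s)^2)/(3*c^2-s^2)^2"
    proof -
      have "(q*c-s)^2 * (q*c+s)^2 = (3*c^2-s^2)^2" using fac by (metis power_mult_distrib)
      then show ?thesis using a0 b0 by (simp add: field_simps)
    qed
    have "(q*c+s)^2 + (q*c-s)^2 = 2*(q^2*c^2+s^2)" by algebra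
    hence e2: "(q*c+s)^2 + (q*c-s)^2 = 2*(3*c^2+s^2)" using q2 by simp
    have e3: "8*(3*c^2+s^2) * s^2 + (3*c^2-s^2)^2 = 9"
    proof -
      have "8*(3*c^2+s^2) * s^2 + (3*c^2-s^2)^2 = 9*(s^2+c^2)^2" by algebra
      then show ?thesis using sc by simp
    qed
    have e4: "(s*(3*c^2-s^2))^2 = s^2*(3*c^2-s^2)^2" by (simp add: power_mult_distrib)
    show ?thesis unfolding e1 e2 e4 using s0 d0 e3 by (simp add: field_simps)
  qed
  then show ?thesis unfolding A B C S3 by (simp add: power_divide)
qed

lemma inner_alpha:
  "(complex_of_real r * cis t) \<bullet> iso_alpha g k = r * sin (real k * pi / real g - t)"
  unfolding iso_alpha_def
  by (simp add: inner_complex_def cos_diff sin_diff algebra_simps)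
lemma div_of_real: "a / complex_of_real d = (1/d) *\<^sub>R a"
  by (cases "d=0") (simp_all add: scaleR_conv_of_real field_simps)
lemma shape_ev: "iso_shape_ev g x k xi = - (xi \<bullet> iso_alpha g k) / (x \<bullet> iso_alpha g k)"
  unfolding iso_shape_ev_def minus_divide_left[symmetric] div_of_real inner_minus_right inner_scaleR_right
  by simp
lemma L2: fixes a :: real assumes "sin (2*a) \<noteq> 0"
  shows "1/(sin a)\<^sup>2 + 1/(cos a)\<^sup>2 = 4/(sin (2*a))\<^sup>2"
proof -
  have "sin a \<noteq> 0" "cos a \<noteq> 0" using assms by (auto simp: sin_double)
  then show ?thesis unfolding sin_double
    by (simp add: field_simps power_mult_distrib)
qed
lemma Ealg: fixes S C G m1 m2 M :: real
  assumes "S \<noteq> 0" "C \<noteq> 0" "S + C = 1" "M = m1 + m2" "M \<noteq> 0"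
  shows "(G^2/4)*(m1/C + m2/S) = ((m1+m2)*G/2)*G/(4*S*C) * (1 + (m2-m1)/(m2+m1)*(C-S))"
proof -
  have h: "C = 1 - S" using assms by simp
  have eq: "1 + (m2-m1)/(m2+m1)*(C-S) = (2*m1*S+2*m2*C)/(m1+m2)"
    using assms h by (simp add: field_simps) (simp add: h algebra_simps)
  have nz: "m1+m2 \<noteq> 0" using assms by simp
  have "((m1+m2)*G/2)*G/(4*S*C) * ((2*m1*S+2*m2*C)/(m1+m2)) = (G^2 * (m1*S+m2*C))/(4*S*C)"
    using nz assms(1,2) by (simp add: power2_eq_square) (simp add: field_simps)
  also have "\<dots> = (G^2/4)*(m1/C + m2/S)" using assms(1,2) by (simp add: field_simps)
  finally show ?thesis unfolding eq by simp
qed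
lemma E: fixes P G m1 m2 :: real assumes "sin (2*P) \<noteq> 0" "m1 + m2 > 0"
  shows "(G^2/4)*(m1/(cos P)\<^sup>2 + m2/(sin P)\<^sup>2)
     = ((m1+m2)*G/2)*G/(sin(2*P))\<^sup>2 * (1 + (m2-m1)/(m2+m1)*cos(2*P))"
proof -
  have s: "sin P \<noteq> 0" and c: "cos P \<noteq> 0" using assms by (auto simp: sin_double)
  have e: "(sin(2*P))\<^sup>2 = 4*(sin P)\<^sup>2*(cos P)\<^sup>2" unfolding sin_double by (simp add: power_mult_distrib)
  show ?thesis unfolding e cos_double
    by (rule Ealg[of "(sin P)^2" "(cos P)^2" "m1+m2" m1 m2 G]) (use s c assms(2) in auto)
qed

definition Tsum :: "nat \<Rightarrow> nat \<Rightarrow> nat \<Rightarrow> real \<Rightarrow> real" where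
  "Tsum g m1 m2 t = (\<Sum>k=1..g. real (iso_mult m1 m2 k) / (sin (real k * pi / real g - t))\<^sup>2)"
lemma S4: "{1..4::nat} = {1,2,3,4}" by auto
lemma S6: "{1..6::nat} = {1,2,3,4,5,6}" by auto
lemma S3: "{1..3::nat} = {1,2,3}" by auto
lemma T4: "Tsum 4 m1 m2 t = real m1 / (sin (pi/4 - t))\<^sup>2 + real m2 / (sin (pi/2 - t))\<^sup>2
   + real m1 / (sin (3*pi/4 - t))\<^sup>2 + real m2 / (sin (pi - t))\<^sup>2"
  unfolding Tsum_def S4 by (simp add: iso_mult_def)
lemma T6: "Tsum 6 m1 m2 t = real m1 / (sin (pi/6 - t))\<^sup>2 + real m2 / (sin (pi/3 - t))\<^sup>2
   + real m1 / (sin (pi/2 - t))\<^sup>2 + real m2 / (sin (2*pi/3 - t))\<^sup>2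
   + real m1 / (sin (5*pi/6 - t))\<^sup>2 + real m2 / (sin (pi - t))\<^sup>2"
  unfolding Tsum_def S6 by (simp add: iso_mult_def)
lemma T3: "Tsum 3 m1 m2 t = real m1 / (sin (pi/3 - t))\<^sup>2 + real m2 / (sin (2*pi/3 - t))\<^sup>2
   + real m1 / (sin (pi - t))\<^sup>2"
  unfolding Tsum_def S3 by (simp add: iso_mult_def)
lemma T2: "Tsum 2 m1 m2 t = real m1 / (sin (pi/2 - t))\<^sup>2 + real m2 / (sin (pi - t))\<^sup>2"
  unfolding Tsum_def by (simp add: eval_nat_numeral iso_mult_def)
lemma T1: "Tsum 1 m1 m2 t = real m1 / (sin (pi - t))\<^sup>2"
  unfolding Tsum_def by (simp add: iso_mult_def)

lemma sin_half_minus: "sin (pi/2 - a) = cos a" by (simp add: sin_diff)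
lemma sin_half_plus: "sin (pi/2 + a) = cos a" by (simp add: sin_add)
lemma nreal: assumes "(m1+m2)*g = 2*(n::nat)"
  shows "real n = (real m1 + real m2) * real g / 2"
proof -
  have "real ((m1+m2)*g) = real (2*n)" by (simp only: assms)
  then show ?thesis by simp
qed
lemma K4:
  assumes "(m1+m2)*4 = 2*n" "1 \<le> m1" "0 < t" "t < pi/4"
  shows "Tsum 4 m1 m2 t = real n * 4 / (sin (4*t))\<^sup>2 * (1 + iso_delta 4 m1 m2 * cos (4*t))"
proof -
  define a where "a = pi/4 - t"
  have e3: "sin (3*pi/4 - t) = cos a"
  proof -
    have "3*pi/4 - t = pi/2 + a" unfolding a_def by simp
    then show ?thesis by (simp add: sin_half_plus)
  qed
  have e1: "sin (pi/4 - t) = sin a" unfolding a_def ..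
  have s2a: "sin (2*a) = cos (2*t)"
  proof -
    have "2*a = pi/2 - 2*t" unfolding a_def by simp
    then show ?thesis by (simp add: sin_half_minus)
  qed
  have c2t: "cos (2*t) > 0" using assms by (intro cos_gt_zero_pi) auto
  have s2t: "sin (2*t) > 0" using assms by (intro sin_gt_zero) auto
  have s4t: "sin (2*(2*t)) \<noteq> 0"
  proof -
    have "sin (2*(2*t)) > 0" using assms by (intro sin_gt_zero) auto
    then show ?thesis by simp
  qed
  have La: "1/(sin a)\<^sup>2 + 1/(cos a)\<^sup>2 = 4/(cos (2*t))\<^sup>2"
    using L2[of a] s2a c2t by simp
  have Lt: "1/(sin t)\<^sup>2 + 1/(cos t)\<^sup>2 = 4/(sin (2*t))\<^sup>2"
    using L2[of t] s2t by simp
  have "Tsum 4 m1 m2 t = real m1 * (1/(sin a)\<^sup>2 + 1/(cos a)\<^sup>2) + real m2 * (1/(sin t)\<^sup>2 + 1/(cos t)\<^sup>2)"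
    unfolding T4 e1 e3 sin_half_minus by (simp add: algebra_simps)
  also have "\<dots> = (4^2/4) * (real m1/(cos (2*t))\<^sup>2 + real m2/(sin (2*t))\<^sup>2)"
    unfolding La Lt by (simp add: mult.commute)
  also have "\<dots> = ((real m1 + real m2)*4/2)*4/(sin(2*(2*t)))\<^sup>2 * (1 + (real m2 - real m1)/(real m2 + real m1)*cos(2*(2*t)))"
    by (rule E) (use s4t assms(2) in auto)
  also have "\<dots> = real n * 4 / (sin (4*t))\<^sup>2 * (1 + iso_delta 4 m1 m2 * cos (4*t))"
  proof -
    have "(real m1 + real m2)*4/2 = real n" using nreal[OF assms(1)] by simp
    moreover have "2*(2*t) = 4*t" by simp
    ultimately show ?thesis by (simp add: iso_delta_def)
  qed
  finally show ?thesis .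
qed
lemma K2:
  assumes "(m1+m2)*2 = 2*n" "1 \<le> m1" "0 < t" "t < pi/2"
  shows "Tsum 2 m1 m2 t = real n * 2 / (sin (2*t))\<^sup>2 * (1 + iso_delta 2 m1 m2 * cos (2*t))"
proof -
  have s2t: "sin (2*t) \<noteq> 0"
  proof -
    have "sin (2*t) > 0" using assms by (intro sin_gt_zero) auto
    then show ?thesis by simp
  qed
  have "Tsum 2 m1 m2 t = (2^2/4) * (real m1/(cos t)\<^sup>2 + real m2/(sin t)\<^sup>2)"
    unfolding T2 sin_half_minus by simp
  also have "\<dots> = ((real m1 + real m2)*2/2)*2/(sin(2*t))\<^sup>2 * (1 + (real m2 - real m1)/(real m2 + real m1)*cos(2*t))"
    by (rule E) (use s2t assms(2) in auto)
  also have "\<dots> = real n * 2 / (sin (2*t))\<^sup>2 * (1 + iso_delta 2 m1 m2 * cos (2*t))"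
  proof -
    have "(real m1 + real m2)*2/2 = real n" using nreal[OF assms(1)] by simp
    then show ?thesis by (simp add: iso_delta_def)
  qed
  finally show ?thesis .
qed
lemma K1:
  assumes "m1 = m2" "(m1+m2)*1 = 2*n" "0 < t" "t < pi"
  shows "Tsum 1 m1 m2 t = real n * 1 / (sin (1*t))\<^sup>2 * (1 + iso_delta 1 m1 m2 * cos (1*t))"
  using nreal[OF assms(2)] assms(1) unfolding T1 by (simp add: iso_delta_def)
lemma K3:
  assumes "m1 = m2" "(m1+m2)*3 = 2*n" "0 < t" "t < pi/3"
  shows "Tsum 3 m1 m2 t = real n * 3 / (sin (3*t))\<^sup>2 * (1 + iso_delta 3 m1 m2 * cos (3*t))"
proof -
  have s3t: "sin (3*t) \<noteq> 0"
  proof -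
    have "sin (3*t) > 0" using assms by (intro sin_gt_zero) auto
    then show ?thesis by simp
  qed
  have "Tsum 3 m1 m2 t = real m1 * (1/(sin(pi/3-t))\<^sup>2 + 1/(sin(2*pi/3-t))\<^sup>2 + 1/(sin(pi-t))\<^sup>2)"
    unfolding T3 using assms(1) by (simp add: algebra_simps)
  also have "\<dots> = real m1 * 9 / (sin (3*t))\<^sup>2" unfolding L3[OF s3t] by simp
  also have "\<dots> = real n * 3 / (sin (3*t))\<^sup>2 * (1 + iso_delta 3 m1 m2 * cos (3*t))"
    using nreal[OF assms(2)] assms(1) by (simp add: iso_delta_def)
  finally show ?thesis .
qed
lemma K6:
  assumes "(m1+m2)*6 = 2*n" "1 \<le> m1" "0 < t" "t < pi/6"
  shows "Tsum 6 m1 m2 t = real n * 6 / (sin (6*t))\<^sup>2 * (1 + iso_delta 6 m1 m2 * cos (6*t))"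
proof -
  define u where "u = t - pi/6"
  have s3t: "sin (3*t) > 0" using assms by (intro sin_gt_zero) auto
  have c3t: "cos (3*t) > 0" using assms by (intro cos_gt_zero_pi) auto
  have s3u: "sin (3*u) = - cos (3*t)"
  proof -
    have "3*u = 3*t - pi/2" unfolding u_def by simp
    then show ?thesis by (simp add: sin_diff)
  qed
  have u1: "sin (pi/3 - u) = sin (pi/2 - t)"
  proof - have "pi/3 - u = pi/2 - t" unfolding u_def by simp then show ?thesis by simp qed
  have u2: "sin (2*pi/3 - u) = sin (5*pi/6 - t)"
  proof - have "2*pi/3 - u = 5*pi/6 - t" unfolding u_def by simp then show ?thesis by simp qed
  have u3: "sin (pi - u) = - sin (pi/6 - t)"
  proof -
    have eq: "pi - u = (pi/6 - t) + pi" unfolding u_def by simp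
    have "sin (pi - u) = sin ((pi/6 - t) + pi)" by (simp only: eq)
    also have "\<dots> = - sin (pi/6 - t)" by (rule sin_periodic_pi)
    finally show ?thesis .
  qed
  have Lodd: "1/(sin(pi/2-t))\<^sup>2 + 1/(sin(5*pi/6-t))\<^sup>2 + 1/(sin(pi/6-t))\<^sup>2 = 9/(cos (3*t))\<^sup>2"
    using L3[of u] s3u c3t unfolding u1 u2 u3 by simp
  have Leven: "1/(sin(pi/3-t))\<^sup>2 + 1/(sin(2*pi/3-t))\<^sup>2 + 1/(sin(pi-t))\<^sup>2 = 9/(sin (3*t))\<^sup>2"
    using L3[of t] s3t by simp
  have s6t: "sin (2*(3*t)) \<noteq> 0"
  proof -
    have "sin (2*(3*t)) > 0" using assms by (intro sin_gt_zero) auto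
    then show ?thesis by simp
  qed
  have "Tsum 6 m1 m2 t = real m1 * (1/(sin(pi/2-t))\<^sup>2 + 1/(sin(5*pi/6-t))\<^sup>2 + 1/(sin(pi/6-t))\<^sup>2)
      + real m2 * (1/(sin(pi/3-t))\<^sup>2 + 1/(sin(2*pi/3-t))\<^sup>2 + 1/(sin(pi-t))\<^sup>2)"
    unfolding T6 by (simp add: algebra_simps)
  also have "\<dots> = (6^2/4) * (real m1/(cos (3*t))\<^sup>2 + real m2/(sin (3*t))\<^sup>2)"
    unfolding Lodd Leven by (simp add: mult.commute)
  also have "\<dots> = ((real m1 + real m2)*6/2)*6/(sin(2*(3*t)))\<^sup>2 * (1 + (real m2 - real m1)/(real m2 + real m1)*cos(2*(3*t)))"
    by (rule E) (use s6t assms(2) in auto)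
  also have "\<dots> = real n * 6 / (sin (6*t))\<^sup>2 * (1 + iso_delta 6 m1 m2 * cos (6*t))"
  proof -
    have "(real m1 + real m2)*6/2 = real n" using nreal[OF assms(1)] by simp
    moreover have "2*(3*t) = 6*t" by simp
    ultimately show ?thesis by (simp add: iso_delta_def)
  qed
  finally show ?thesis .
qed
lemma Ksum:
  assumes "g \<in> {1, 2, 3, 4, 6}" "odd g \<longrightarrow> m1 = m2" "(m1 + m2) * g = 2 * n"
  shows "(\<Sum>k=1..g. real (iso_mult m1 m2 k)) = real n"
proof -
  have nr: "real n = (real m1 + real m2) * real g / 2" by (rule nreal[OF assms(3)])
  from assms(1) consider "g=1" | "g=2" | "g=3" | "g=4" | "g=6" by auto
  then show ?thesis
  proof cases
    case 1 then show ?thesis using nr assms(2) by (simp add: iso_mult_def)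
  next
    case 2 then show ?thesis using nr by (simp add: iso_mult_def eval_nat_numeral)
  next
    case 3 then show ?thesis unfolding 3 S3 using nr assms(2) 3 by (simp add: iso_mult_def)
  next
    case 4 then show ?thesis unfolding 4 S4 using nr 4 by (simp add: iso_mult_def)
  next
    case 5 then show ?thesis unfolding 5 S6 using nr 5 by (simp add: iso_mult_def)
  qed
qed

lemma Kall:
  assumes "g \<in> {1, 2, 3, 4, 6}" "1 \<le> m1" "odd g \<longrightarrow> m1 = m2" "(m1 + m2) * g = 2 * n"
    "0 < t" "t < pi / real g"
  shows "Tsum g m1 m2 t = real n * real g / (sin (real g * t))\<^sup>2 * (1 + iso_delta g m1 m2 * cos (real g * t))"
proof -
  from assms(1) consider "g=1" | "g=2" | "g=3" | "g=4" | "g=6" by auto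
  then show ?thesis
  proof cases
    case 1 then show ?thesis using K1[of m1 m2 n t] assms by simp
  next
    case 2 then show ?thesis using K2[of m1 m2 n t] assms by simp
  next
    case 3 then show ?thesis using K3[of m1 m2 n t] assms by simp
  next
    case 4 then show ?thesis using K4[of m1 m2 n t] assms by simp
  next
    case 5 then show ?thesis using K6[of m1 m2 n t] assms by simp
  qed
qed

theorem lemma4p7:
  fixes g m1 m2 n :: nat and r \<theta> :: real and x e1 e2 \<nu> :: complex
  assumes "g \<in> {1, 2, 3, 4, 6}"
    and "1 \<le> m1" and "m1 \<le> m2" and "odd g \<longrightarrow> m1 = m2"
    and "(m1 + m2) * g = 2 * n"
    and "r > 0" and "0 < \<theta>" and "\<theta> < pi / real g"
    and "x = complex_of_real r * cis \<theta>"
    and "norm e1 = 1" and "norm e2 = 1" and "e1 \<bullet> e2 = 0"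
    and "norm \<nu> = 1" and "\<nu> \<bullet> x = 0"
  shows "iso_normE_sq g m1 m2 x e1 e2 =
           real n * real g / r\<^sup>2 * (1 / (sin (real g * \<theta>))\<^sup>2)
             * (1 + iso_delta g m1 m2 * cos (real g * \<theta>))
     \<and> iso_normS_sq g m1 m2 x \<nu> =
           real n * real g / r\<^sup>2 * (1 / (sin (real g * \<theta>))\<^sup>2)
             * (1 + iso_delta g m1 m2 * cos (real g * \<theta>)) - real n / r\<^sup>2"
proof -
  define Q where "Q = real n * real g / (sin (real g * \<theta>))\<^sup>2 * (1 + iso_delta g m1 m2 * cos (real g * \<theta>))"
  have g1: "g \<ge> 1" using assms(1) by auto
  have gpos: "real g > 0" using g1 by simp
  have na: "\<And>k. norm (iso_alpha g k) = 1" by (simp add: iso_alpha_def)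
  have D: "\<And>k. x \<bullet> iso_alpha g k = r * sin (real k * pi / real g - \<theta>)"
    using inner_alpha assms(9) by simp
  have Dpos: "sin (real k * pi / real g - \<theta>) > 0" if k: "k \<in> {1..g}" for k
  proof (rule sin_gt_zero)
    have "pi / real g \<le> real k * pi / real g"
      using k gpos by (intro divide_right_mono) auto
    then show "0 < real k * pi / real g - \<theta>" using assms(8) by linarith
    have "real k * pi / real g \<le> real g * pi / real g"
      using k gpos by (intro divide_right_mono) auto
    then show "real k * pi / real g - \<theta> < pi" using assms(7) gpos by simp
  qed
  have HS: "\<And>xi. iso_HS_sq g m1 m2 x xi = (\<Sum>k=1..g. real (iso_mult m1 m2 k) * (xi \<bullet> iso_alpha g k)\<^sup>2 / (x \<bullet> iso_alpha g k)\<^sup>2)"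
    unfolding iso_HS_sq_def shape_ev by (simp add: power_divide)
  have sumD: "(\<Sum>k=1..g. real (iso_mult m1 m2 k) / (x \<bullet> iso_alpha g k)\<^sup>2) = Tsum g m1 m2 \<theta> / r\<^sup>2"
    unfolding Tsum_def D sum_divide_distrib by (simp add: power_mult_distrib field_simps)
  have T: "Tsum g m1 m2 \<theta> = Q" unfolding Q_def by (rule Kall) (use assms in auto)
  have E: "iso_normE_sq g m1 m2 x e1 e2 = Q / r\<^sup>2"
  proof -
    have "iso_normE_sq g m1 m2 x e1 e2 = (\<Sum>k=1..g. real (iso_mult m1 m2 k) * ((e1 \<bullet> iso_alpha g k)\<^sup>2 + (e2 \<bullet> iso_alpha g k)\<^sup>2) / (x \<bullet> iso_alpha g k)\<^sup>2)"
      unfolding iso_normE_sq_def HS sum.distrib[symmetric] by (simp add: algebra_simps add_divide_distrib)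
    also have "\<dots> = (\<Sum>k=1..g. real (iso_mult m1 m2 k) / (x \<bullet> iso_alpha g k)\<^sup>2)"
      using parseval[OF assms(10,11,12)] na by simp
    finally show ?thesis using sumD T by simp
  qed
  have nx: "norm x = r" using assms(6,9) by (simp add: norm_mult)
  define y where "y = (1/r) *\<^sub>R x"
  have ny: "norm y = 1" unfolding y_def using nx assms(6) by simp
  have yv: "y \<bullet> \<nu> = 0" unfolding y_def using assms(14) by (simp add: inner_commute)
  have S: "iso_normS_sq g m1 m2 x \<nu> = Q / r\<^sup>2 - real n / r\<^sup>2"
  proof -
    have pv: "(\<nu> \<bullet> iso_alpha g k)\<^sup>2 = 1 - (x \<bullet> iso_alpha g k)\<^sup>2 / r\<^sup>2" for k
    proof -
      have "(y \<bullet> iso_alpha g k)\<^sup>2 + (\<nu> \<bullet> iso_alpha g k)\<^sup>2 = 1"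
        using parseval[OF ny assms(13) yv] na by simp
      moreover have "(y \<bullet> iso_alpha g k)\<^sup>2 = (x \<bullet> iso_alpha g k)\<^sup>2 / r\<^sup>2"
        unfolding y_def by (simp add: power_divide)
      ultimately show ?thesis by simp
    qed
    have "iso_normS_sq g m1 m2 x \<nu> = (\<Sum>k=1..g. real (iso_mult m1 m2 k) / (x \<bullet> iso_alpha g k)\<^sup>2 - real (iso_mult m1 m2 k) / r\<^sup>2)"
      unfolding iso_normS_sq_def HS pv
    proof (rule sum.cong[OF refl])
      fix k assume k: "k \<in> {1..g}"
      have "x \<bullet> iso_alpha g k \<noteq> 0" using Dpos[OF k] assms(6) D by simp
      then show "real (iso_mult m1 m2 k) * (1 - (x \<bullet> iso_alpha g k)\<^sup>2 / r\<^sup>2) / (x \<bullet> iso_alpha g k)\<^sup>2 =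
        real (iso_mult m1 m2 k) / (x \<bullet> iso_alpha g k)\<^sup>2 - real (iso_mult m1 m2 k) / r\<^sup>2"
        using assms(6) by (simp add: field_simps)
    qed
    also have "\<dots> = Q / r\<^sup>2 - real n / r\<^sup>2"
      unfolding sum_subtractf sumD T sum_divide_distrib[symmetric] Ksum[OF assms(1,4,5)] ..
    finally show ?thesis .
  qed
  show ?thesis unfolding E S Q_def by simp
qed
end
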